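(* Let $\Omega\subseteq\mathbb{R}^n$ be a bounded open set with Lipschitz boundary, $\varepsilon>0$, $g\in C^{0,1}_{\mathrm{loc}}(\mathbb{R}^n)\cap L^\infty(\mathbb{R}^n)$, $f\in L^\infty(\Omega)$, and let $v_\varepsilon\in H^s_g(\Omega)\cap L^p(\Omega)$ be a weak solution of $(-\Delta)^sv_\varepsilon+\varepsilon^{-2s}W'(v_\varepsilon)=f$ in $\Omega$. Then $v_\varepsilon\in L^\infty(\mathbb{R}^n)$.
   Context: $n\ge2$, $s\in(0,1/2)$. $W$ satisfies: $W\in C^2(\mathbb{R};[0,\infty))$; $\{W=0\}=\{\pm1\}$, $W''(\pm1)>0$; there exist $p\in(1,\infty)$ and $c_W>0$ with $c_W^{-1}(|t|^{p-1}-1)\le|W'(t)|\le c_W(|t|^{p-1}+1)$ for all $t$ ($p$ is this exponent). $\gamma_{n,s}:=s2^{2s}\pi^{-n/2}\Gamma(\frac{n+2s}{2})/\Gamma(1-s)$; $\mathcal{E}(v,\Omega):=\frac{\gamma_{n,s}}{4}\iint_{\Omega\times\Omega}\frac{|v(x)-v(y)|^2}{|x-y|^{n+2s}}+\frac{\gamma_{n,s}}{2}\iint_{\Omega\times\Omega^c}\frac{|v(x)-v(y)|^2}{|x-y|^{n+2s}}$; $\widehat H^s(\Omega)=\{v\in L^2_{\mathrm{loc}}(\mathbb{R}^n):\mathcal{E}(v,\Omega)<\infty\}$; $H^s_{00}(\Omega)=\{v\in H^s(\mathbb{R}^n):v=0$ a.e. outside $\Omega\}$; $H^s_g(\Omega)=\{v\in\widehat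 H^s(\Omega):v=g$ a.e. in $\mathbb{R}^n\setminus\Omega\}$. $\langle(-\Delta)^sv,\varphi\rangle_\Omega=\frac{\gamma_{n,s}}{2}\iint_{\Omega\times\Omega}\frac{(v(x)-v(y))(\varphi(x)-\varphi(y))}{|x-y|^{n+2s}}+\gamma_{n,s}\iint_{\Omega\times\Omega^c}\frac{(v(x)-v(y))(\varphi(x)-\varphi(y))}{|x-y|^{n+2s}}$. Weak solution means $v\in\widehat H^s(\Omega)\cap L^p(\Omega)$ and $\langle(-\Delta)^sv,\varphi\rangle_\Omega+\varepsilon^{-2s}\int_\Omega W'(v)\varphi=\int_\Omega f\varphi$ for all $\varphi\in H^s_{00}(\Omega)\cap L^p(\Omega)$. *)

theory Defs
  imports "HOL-Analysis.Analysis"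
begin

text \<open>Ambient space: R^n is rendered as an abstract euclidean_space 'a with n = DIM('a).\<close>

definition gamma_ns :: "nat \<Rightarrow> real \<Rightarrow> real" where
  "gamma_ns n s = s * 2 powr (2 * s) * pi powr (- real n / 2) * Gamma ((real n + 2 * s) / 2) / Gamma (1 - s)"

definition frac_kernel :: "real \<Rightarrow> 'a::euclidean_space \<Rightarrow> 'a \<Rightarrow> real" where
  "frac_kernel s x y = 1 / (norm (x - y) powr (real DIM('a) + 2 * s))"

definition frac_energy :: "real \<Rightarrow> 'a::euclidean_space set \<Rightarrow> ('a \<Rightarrow> real) \<Rightarrow> ennreal" where
  "frac_energy s \<Omega> v =
     ennreal (gamma_ns DIM('a) s / 4) *
       (\<integral>\<^sup>+ z. indicator (\<Omega> \<times> \<Omega>) z * ennreal ((v (fst z) - v (snd z))^2 * frac_kernel s (fst z) (snd z)) \<partial>(lebesgue \<Otimes>\<^sub>M lebesgue))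
   + ennreal (gamma_ns DIM('a) s / 2) *
       (\<integral>\<^sup>+ z. indicator (\<Omega> \<times> (- \<Omega>)) z * ennreal ((v (fst z) - v (snd z))^2 * frac_kernel s (fst z) (snd z)) \<partial>(lebesgue \<Otimes>\<^sub>M lebesgue))"

definition L2_loc :: "('a::euclidean_space \<Rightarrow> real) set" where
  "L2_loc = {v. v \<in> borel_measurable lebesgue \<and>
     (\<forall>K. compact K \<longrightarrow> (\<integral>\<^sup>+ x. indicator K x * ennreal ((v x)^2) \<partial>lebesgue) < \<infinity>)}"

definition hatH :: "real \<Rightarrow> 'a::euclidean_space set \<Rightarrow> ('a \<Rightarrow> real) set" where
  "hatH s \<Omega> = {v. v \<in> L2_loc \<and> frac_energy s \<Omega> v < \<infinity>}"

definition Hs_g :: "real \<Rightarrow> 'a::euclidean_space set \<Rightarrow> ('a \<Rightarrow> real) \<Rightarrow> ('a \<Rightarrow> real) set" where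
  "Hs_g s \<Omega> g = {v. v \<in> hatH s \<Omega> \<and> (AE x in lebesgue. x \<notin> \<Omega> \<longrightarrow> v x = g x)}"

definition Hs_full :: "real \<Rightarrow> ('a::euclidean_space \<Rightarrow> real) set" where
  "Hs_full s = {v. v \<in> borel_measurable lebesgue \<and>
     (\<integral>\<^sup>+ x. ennreal ((v x)^2) \<partial>lebesgue) < \<infinity> \<and>
     (\<integral>\<^sup>+ z. ennreal ((v (fst z) - v (snd z))^2 * frac_kernel s (fst z) (snd z)) \<partial>(lebesgue \<Otimes>\<^sub>M lebesgue)) < \<infinity>}"

definition Hs_00 :: "real \<Rightarrow> 'a::euclidean_space set \<Rightarrow> ('a \<Rightarrow> real) set" where
  "Hs_00 s \<Omega> = {v. v \<in> Hs_full s \<and> (AE x in lebesgue. x \<notin> \<Omega> \<longrightarrow> v x = 0)}"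

definition Lp_on :: "real \<Rightarrow> 'a::euclidean_space set \<Rightarrow> ('a \<Rightarrow> real) set" where
  "Lp_on p \<Omega> = {v. set_borel_measurable lebesgue \<Omega> v \<and>
     (\<integral>\<^sup>+ x. indicator \<Omega> x * ennreal (\<bar>v x\<bar> powr p) \<partial>lebesgue) < \<infinity>}"

definition Linfty_on :: "'a::euclidean_space set \<Rightarrow> ('a \<Rightarrow> real) set" where
  "Linfty_on \<Omega> = {v. set_borel_measurable lebesgue \<Omega> v \<and>
     (\<exists>C. AE x in lebesgue. x \<in> \<Omega> \<longrightarrow> \<bar>v x\<bar> \<le> C)}"

definition frac_form :: "real \<Rightarrow> 'a::euclidean_space set \<Rightarrow> ('a \<Rightarrow> real) \<Rightarrow> ('a \<Rightarrow> real) \<Rightarrow> real" where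
  "frac_form s \<Omega> v \<phi> =
     gamma_ns DIM('a) s / 2 *
       (\<integral> z. indicator (\<Omega> \<times> \<Omega>) z * ((v (fst z) - v (snd z)) * (\<phi> (fst z) - \<phi> (snd z)) * frac_kernel s (fst z) (snd z)) \<partial>(lebesgue \<Otimes>\<^sub>M lebesgue))
   + gamma_ns DIM('a) s *
       (\<integral> z. indicator (\<Omega> \<times> (- \<Omega>)) z * ((v (fst z) - v (snd z)) * (\<phi> (fst z) - \<phi> (snd z)) * frac_kernel s (fst z) (snd z)) \<partial>(lebesgue \<Otimes>\<^sub>M lebesgue))"

definition weak_solution ::
  "real \<Rightarrow> real \<Rightarrow> real \<Rightarrow> (real \<Rightarrow> real) \<Rightarrow> ('a::euclidean_space \<Rightarrow> real) \<Rightarrow> 'a set \<Rightarrow> ('a \<Rightarrow> real) \<Rightarrow> bool" where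
  "weak_solution s p \<epsilon> W' f \<Omega> v \<longleftrightarrow>
     v \<in> hatH s \<Omega> \<and> v \<in> Lp_on p \<Omega> \<and>
     (\<forall>\<phi> \<in> Hs_00 s \<Omega> \<inter> Lp_on p \<Omega>.
        frac_form s \<Omega> v \<phi> + \<epsilon> powr (- 2 * s) * (\<integral> x. indicator \<Omega> x * (W' (v x) * \<phi> x) \<partial>lebesgue)
        = (\<integral> x. indicator \<Omega> x * (f x * \<phi> x) \<partial>lebesgue))"

text \<open>Lipschitz boundary: near each boundary point, after choosing a unit direction nu,
  Omega is the strict epigraph (in direction nu) of a Lipschitz function of the
  coordinates orthogonal to nu.\<close>
definition lipschitz_boundary :: "'a::euclidean_space set \<Rightarrow> bool" where
  "lipschitz_boundary \<Omega> \<longleftrightarrow>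
     (\<forall>x0 \<in> frontier \<Omega>. \<exists>r>0. \<exists>\<nu>::'a. \<exists>\<gamma>::'a \<Rightarrow> real. \<exists>L.
        norm \<nu> = 1 \<and> L-lipschitz_on UNIV \<gamma> \<and>
        (\<forall>y. \<gamma> y = \<gamma> (y - (y \<bullet> \<nu>) *\<^sub>R \<nu>)) \<and>
        \<Omega> \<inter> ball x0 r = {y \<in> ball x0 r. y \<bullet> \<nu> > \<gamma> y})"

definition loc_lipschitz :: "('a::euclidean_space \<Rightarrow> real) \<Rightarrow> bool" where
  "loc_lipschitz g \<longleftrightarrow> (\<forall>K. compact K \<longrightarrow> (\<exists>L. L-lipschitz_on K g))"

end

theory Submission
  imports Defs
begin

lemma sf_lebesgue: "sigma_finite_measure (lebesgue::'a::euclidean_space measure)"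
proof
  show "\<exists>A. countable A \<and> A \<subseteq> sets (lebesgue::'a measure) \<and> \<Union> A = space lebesgue \<and> (\<forall>a\<in>A. emeasure lebesgue a \<noteq> \<infinity>)"
  proof (intro exI conjI)
    show "countable (range (\<lambda>n::nat. cball (0::'a) (real n)))" by simp
    show "range (\<lambda>n::nat. cball (0::'a) (real n)) \<subseteq> sets lebesgue" by auto
    show "\<Union> (range (\<lambda>n::nat. cball (0::'a) (real n))) = space lebesgue"
      by (auto simp: dist_norm) (meson real_arch_simple)
    show "\<forall>a\<in>range (\<lambda>n::nat. cball (0::'a) (real n)). emeasure lebesgue a \<noteq> \<infinity>"
      using fmeasurableD2[OF lmeasurable_cball] by auto
  qed
qed

lemma psf: "pair_sigma_finite lebesgue (lebesgue::'a::euclidean_space measure)"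
  by (intro pair_sigma_finite.intro sf_lebesgue)

lemma fst_bm[measurable]: "(fst :: 'a::euclidean_space\<times>'a \<Rightarrow> 'a) \<in> lebesgue \<Otimes>\<^sub>M lebesgue \<rightarrow>\<^sub>M borel"
  using measurable_compose[OF measurable_fst id_borel_measurable_lebesgue] by (simp add: id_def)

lemma snd_bm[measurable]: "(snd :: 'a::euclidean_space\<times>'a \<Rightarrow> 'a) \<in> lebesgue \<Otimes>\<^sub>M lebesgue \<rightarrow>\<^sub>M borel"
  using measurable_compose[OF measurable_snd id_borel_measurable_lebesgue] by (simp add: id_def)

lemma kern_bm[measurable]: "(\<lambda>z. frac_kernel s (fst z) (snd z)) \<in> borel_measurable (lebesgue \<Otimes>\<^sub>M (lebesgue::'a::euclidean_space measure))"
  unfolding frac_kernel_def by measurable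

lemma kern_nonneg: "frac_kernel s x y \<ge> 0"
  unfolding frac_kernel_def by simp

definition trunc :: "real \<Rightarrow> real \<Rightarrow> real" where
  "trunc M t = max (-1) (min 1 (max (t - M) 0 + min (t + M) 0))"

lemma trunc_mono: "M \<ge> 0 \<Longrightarrow> a \<le> b \<Longrightarrow> trunc M a \<le> trunc M b"
  unfolding trunc_def by (auto simp: max_def min_def)

lemma trunc_lip: "M \<ge> 0 \<Longrightarrow> \<bar>trunc M a - trunc M b\<bar> \<le> \<bar>a - b\<bar>"
  unfolding trunc_def by (auto simp: max_def min_def abs_if)

lemma trunc_zero: assumes "\<bar>t\<bar> \<le> M" shows "trunc M t = 0"
proof -
  have "-M \<le> t" "t \<le> M" using assms by auto
  thus ?thesis unfolding trunc_def by (simp add: max_def min_def)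
qed

lemma trunc_bd: "\<bar>trunc M t\<bar> \<le> 1"
  unfolding trunc_def by (auto simp: max_def min_def abs_if)

lemma trunc_pos: "M \<ge> 0 \<Longrightarrow> t > M \<Longrightarrow> trunc M t \<ge> 0"
  unfolding trunc_def by (auto simp: max_def min_def)

lemma trunc_neg: "M \<ge> 0 \<Longrightarrow> t < -M \<Longrightarrow> trunc M t \<le> 0"
  unfolding trunc_def by (auto simp: max_def min_def)

lemma trunc_nz: "M \<ge> 0 \<Longrightarrow> trunc M t = 0 \<Longrightarrow> \<bar>t\<bar> \<le> M"
  unfolding trunc_def by (auto simp: max_def min_def abs_if split: if_splits)

lemma trunc_prod: "M \<ge> 0 \<Longrightarrow> (a - b) * (trunc M a - trunc M b) \<ge> 0"
proof (cases "a \<le> b")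
  case True
  assume M: "M \<ge> 0"
  hence "trunc M a \<le> trunc M b" using trunc_mono True by auto
  thus ?thesis using True by (intro mult_nonpos_nonpos) auto
next
  case False
  assume M: "M \<ge> 0"
  hence "trunc M b \<le> trunc M a" using trunc_mono False by auto
  thus ?thesis using False by (intro mult_nonneg_nonneg) auto
qed

lemma trunc_bm[measurable]: assumes [measurable]: "v \<in> borel_measurable M" shows "(\<lambda>x. trunc c (v x)) \<in> borel_measurable M"
  unfolding trunc_def by measurable



lemma sign_const_right:
  fixes h :: "real \<Rightarrow> real"
  assumes cont: "continuous_on UNIV h" and nz: "\<And>t. t \<ge> R \<Longrightarrow> h t \<noteq> 0"
    and a: "a \<ge> R" "h a < 0" and b: "b \<ge> R"
  shows "h b < 0"
proof (rule ccontr)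
  assume "\<not> h b < 0"
  hence hb: "h b > 0" using nz b by force
  show False
  proof (cases "a \<le> b")
    case True
    then obtain x where "a \<le> x" "x \<le> b" "h x = 0"
      using IVT'[of h a 0 b] a hb continuous_on_subset[OF cont] by force
    thus False using nz a by auto
  next
    case False
    then obtain x where "b \<le> x" "x \<le> a" "h x = 0"
      using IVT2'[of h a 0 b] a hb continuous_on_subset[OF cont] by force
    thus False using nz b by auto
  qed
qed

lemma W'_sign:
  fixes W W' W'' :: "real \<Rightarrow> real" and p c K :: real
  assumes W_deriv: "\<And>t. (W has_real_derivative W' t) (at t)"
    and W'_deriv: "\<And>t. (W' has_real_derivative W'' t) (at t)"
    and W_nonneg: "\<And>t. W t \<ge> 0"
    and p: "1 < p" and c: "c > 0"
    and gr: "\<And>t. (\<bar>t\<bar> powr (p-1) - 1) / c \<le> \<bar>W' t\<bar>"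
  shows "\<exists>M\<ge>0. \<forall>t. (t \<ge> M \<longrightarrow> W' t \<ge> K) \<and> (t \<le> -M \<longrightarrow> W' t \<le> -K)"
proof -
  define K' where "K' = max K 1"
  define R where "R = (c * K' + 1) powr (1 / (p - 1))"
  have K'1: "K' \<ge> 1" "K' \<ge> K" by (auto simp: K'_def)
  have R0: "R \<ge> 0" by (simp add: R_def)
  have big: "\<bar>W' t\<bar> \<ge> K'" if "\<bar>t\<bar> \<ge> R" for t
  proof -
    have e: "R powr (p-1) = c * K' + 1"
      unfolding R_def using p c K'1 by (simp add: powr_powr)
    have "R powr (p-1) \<le> \<bar>t\<bar> powr (p-1)"
      using that R0 p by (intro powr_mono2) auto
    with e have "c * K' \<le> \<bar>t\<bar> powr (p-1) - 1" by simp
    hence "K' \<le> (\<bar>t\<bar> powr (p-1) - 1) / c" using c by (simp add: field_simps)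
    thus ?thesis using gr[of t] by linarith
  qed
  have cont: "continuous_on UNIV W'"
    using W'_deriv by (meson DERIV_isCont continuous_at_imp_continuous_on)
  have pos: "W' t > 0" if "t \<ge> R" for t
  proof (rule ccontr)
    assume "\<not> W' t > 0"
    hence neg: "W' t < 0" using big[of t] that R0 K'1 by auto
    have allneg: "W' b < 0" if "b \<ge> R" for b
      using sign_const_right[OF cont _ _ neg that] \<open>t \<ge> R\<close> big R0 K'1
      by (smt (verit))
    have le: "W' b \<le> -1" if "b \<ge> R" for b
      using allneg[OF that] big[of b] that R0 K'1 by auto
    obtain z where z: "R < z" "z < R + (W R + 1)"
      "W (R + (W R + 1)) - W R = (R + (W R + 1) - R) * W' z"
      using MVT2[of R "R + (W R + 1)" W W'] W_nonneg[of R] W_deriv by force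
    have "W' z \<le> -1" using le[of z] z by auto
    hence "(W R + 1) * W' z \<le> (W R + 1) * (-1)"
      using W_nonneg[of R] by (intro mult_left_mono) auto
    moreover have "R + (W R + 1) - R = W R + 1" by simp
    ultimately show False using z(3) W_nonneg[of "R + (W R + 1)"] by (smt (verit))
  qed
  have negl: "W' t < 0" if "t \<le> -R" for t
  proof (rule ccontr)
    assume "\<not> W' t < 0"
    hence ps: "W' t > 0" using big[of t] that R0 K'1 by auto
    define h where "h = (\<lambda>x. - W' (- x))"
    have conth: "continuous_on UNIV h" unfolding h_def
      by (intro continuous_intros continuous_on_compose2[OF cont]) auto
    have allpos: "W' b > 0" if "b \<le> -R" for b
      using sign_const_right[OF conth, of R "-t" "-b"] \<open>t \<le> -R\<close> that big R0 K'1 ps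
      unfolding h_def by (smt (verit))
    have ge: "W' b \<ge> 1" if "b \<le> -R" for b
      using allpos[OF that] big[of b] that R0 K'1 by auto
    obtain z where z: "-R - (W (-R) + 1) < z" "z < -R"
      "W (-R) - W (-R - (W (-R) + 1)) = (-R - (-R - (W (-R) + 1))) * W' z"
      using MVT2[of "-R - (W (-R) + 1)" "-R" W W'] W_nonneg[of "-R"] W_deriv by force
    have "W' z \<ge> 1" using ge[of z] z by auto
    hence "(W (-R) + 1) * W' z \<ge> (W (-R) + 1) * 1"
      using W_nonneg[of "-R"] by (intro mult_left_mono) auto
    moreover have "-R - (-R - (W (-R) + 1)) = W (-R) + 1" by simp
    ultimately show False using z(3) W_nonneg[of "-R - (W (-R) + 1)"] by (smt (verit))
  qed
  show ?thesis
  proof (intro exI[of _ R] conjI allI impI R0)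
    fix t assume "t \<ge> R" thus "W' t \<ge> K" using pos[of t] big[of t] R0 K'1 by auto
  next
    fix t assume "t \<le> -R" thus "W' t \<le> -K" using negl[of t] big[of t] R0 K'1 by auto
  qed
qed


theorem lemma3p7:
  fixes \<Omega> :: "'a::euclidean_space set"
    and W W' W'' :: "real \<Rightarrow> real"
    and s p c\<^sub>W \<epsilon> :: real
    and g v f :: "'a \<Rightarrow> real"
  assumes dim: "DIM('a) \<ge> 2"
    and s: "0 < s" "s < 1/2"
    and W_deriv: "\<And>t. (W has_real_derivative W' t) (at t)"
    and W'_deriv: "\<And>t. (W' has_real_derivative W'' t) (at t)"
    and W''_cont: "continuous_on UNIV W''"
    and W_nonneg: "\<And>t. W t \<ge> 0"
    and W_zeros: "{t. W t = 0} = {-1, 1}"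
    and W''_pos: "W'' 1 > 0" "W'' (-1) > 0"
    and p: "1 < p"
    and cW: "c\<^sub>W > 0"
    and W'_growth: "\<And>t. (\<bar>t\<bar> powr (p-1) - 1) / c\<^sub>W \<le> \<bar>W' t\<bar> \<and> \<bar>W' t\<bar> \<le> c\<^sub>W * (\<bar>t\<bar> powr (p-1) + 1)"
    and \<Omega>: "open \<Omega>" "bounded \<Omega>" "lipschitz_boundary \<Omega>"
    and \<epsilon>: "\<epsilon> > 0"
    and g: "loc_lipschitz g" "\<exists>C. AE x in lebesgue. \<bar>g x\<bar> \<le> C"
    and f: "f \<in> Linfty_on \<Omega>"
    and v: "v \<in> Hs_g s \<Omega> g" "v \<in> Lp_on p \<Omega>"
    and sol: "weak_solution s p \<epsilon> W' f \<Omega> v"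
  shows "v \<in> borel_measurable lebesgue \<and> (\<exists>C. AE x in lebesgue. \<bar>v x\<bar> \<le> C)"

proof -
  have vm[measurable]: "v \<in> borel_measurable lebesgue"
    using v(1) by (simp add: Hs_g_def hatH_def L2_loc_def)
  have vE: "frac_energy s \<Omega> v < \<infinity>"
    using v(1) by (simp add: Hs_g_def hatH_def)
  have vg: "AE x in lebesgue. x \<notin> \<Omega> \<longrightarrow> v x = g x"
    using v(1) by (simp add: Hs_g_def)
  obtain Cg where Cg: "AE x in lebesgue. \<bar>g x\<bar> \<le> Cg" using g(2) by blast
  obtain Cf where Cf: "AE x in lebesgue. x \<in> \<Omega> \<longrightarrow> \<bar>f x\<bar> \<le> Cf"
    and fm: "set_borel_measurable lebesgue \<Omega> f"
    using f by (auto simp: Linfty_on_def)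
  define F where "F = max Cf 0"
  have F0: "F \<ge> 0" by (simp add: F_def)
  have gp: "gamma_ns DIM('a) s > 0"
    unfolding gamma_ns_def using s by (intro divide_pos_pos mult_pos_pos Gamma_real_pos) auto
  define K where "K = \<epsilon> powr (2 * s) * (F + 1)"
  have K0: "K \<ge> 0" using F0 by (simp add: K_def)
  have epsK: "\<epsilon> powr (- 2 * s) * K = F + 1"
  proof -
    have "\<epsilon> powr (- 2 * s) * \<epsilon> powr (2 * s) = 1"
      using \<epsilon> by (simp add: powr_add[symmetric])
    thus ?thesis unfolding K_def by (metis mult.assoc mult_1)
  qed
  obtain M0 where M0: "M0 \<ge> 0" "\<And>t. t \<ge> M0 \<Longrightarrow> W' t \<ge> K" "\<And>t. t \<le> -M0 \<Longrightarrow> W' t \<le> -K"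
    using W'_sign[OF W_deriv W'_deriv W_nonneg p cW, of K] W'_growth by blast
  define M where "M = max M0 (max Cg 0)"
  have M: "M \<ge> 0" "M \<ge> M0" "M \<ge> Cg" by (auto simp: M_def)
  have WT: "W' t * trunc M t \<ge> K * \<bar>trunc M t\<bar>" for t
  proof -
    consider "t > M" | "t < -M" | "\<bar>t\<bar> \<le> M" by linarith
    thus ?thesis
    proof cases
      case 1
      hence "trunc M t \<ge> 0" "W' t \<ge> K" using trunc_pos M M0 by auto
      thus ?thesis by (simp add: mult_right_mono)
    next
      case 2
      hence "trunc M t \<le> 0" "W' t \<le> -K" using trunc_neg M M0 by auto
      hence "W' t * trunc M t \<ge> (-K) * trunc M t" using mult_right_mono_neg[of "W' t" "-K" "trunc M t"] by blast
      thus ?thesis using \<open>trunc M t \<le> 0\<close> by simp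
    next
      case 3 thus ?thesis using trunc_zero by simp
    qed
  qed
  have vout: "AE x in lebesgue. x \<notin> \<Omega> \<longrightarrow> \<bar>v x\<bar> \<le> M"
    using vg Cg by eventually_elim (use M in auto)
  have \<Omega>lm: "\<Omega> \<in> lmeasurable" using lmeasurable_open \<Omega> by blast
  have \<Omega>m[measurable]: "\<Omega> \<in> sets lebesgue" using \<Omega>lm by (simp add: fmeasurable_def)
  have \<Omega>F: "emeasure lebesgue \<Omega> < \<infinity>" using \<Omega>lm by (simp add: fmeasurable_def)
  define w where "w = (\<lambda>x. trunc M (v x))"
  have wm[measurable]: "w \<in> borel_measurable lebesgue" unfolding w_def by measurable
  have wout: "AE x in lebesgue. x \<notin> \<Omega> \<longrightarrow> w x = 0"
    using vout by eventually_elim (auto simp: w_def trunc_zero)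
  have wbd: "\<bar>w x\<bar> \<le> 1" for x unfolding w_def by (rule trunc_bd)
  have w00: "w \<in> Hs_00 s \<Omega>"
    unfolding Hs_00_def Hs_full_def
  proof (intro CollectI conjI wm wout)
    have "(\<integral>\<^sup>+ x. ennreal ((w x)\<^sup>2) \<partial>lebesgue) \<le> (\<integral>\<^sup>+ x. indicator \<Omega> x \<partial>lebesgue)"
      using wout
    proof (intro nn_integral_mono_AE, eventually_elim)
      case (elim x)
      have "(w x)\<^sup>2 \<le> 1" using wbd[of x] by (simp add: abs_square_le_1)
      thus ?case using elim by (auto simp: indicator_def)
    qed
    also have "\<dots> = emeasure lebesgue \<Omega>" using \<Omega>m by simp
    also have "\<dots> < \<infinity>" by (rule \<Omega>F)
    finally show "(\<integral>\<^sup>+ x. ennreal ((w x)\<^sup>2) \<partial>lebesgue) < \<infinity>" .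
  next
    define X where "X = (\<lambda>z. ennreal ((v (fst z) - v (snd z))\<^sup>2 * frac_kernel s (fst z) (snd z)))"
    have Xm[measurable]: "X \<in> borel_measurable (lebesgue \<Otimes>\<^sub>M lebesgue)"
      unfolding X_def by measurable
    have cm: "- \<Omega> \<in> sets lebesgue"
      using sets.compl_sets[OF \<Omega>m] by (simp add: Compl_eq_Diff_UNIV)
    have iA: "(\<lambda>z. indicator (\<Omega> \<times> \<Omega>) z * X z) \<in> borel_measurable (lebesgue \<Otimes>\<^sub>M lebesgue)"
      using Xm \<Omega>m cm by (intro borel_measurable_times_ennreal borel_measurable_indicator pair_measureI) auto
    have iB: "(\<lambda>z. indicator (\<Omega> \<times> - \<Omega>) z * X z) \<in> borel_measurable (lebesgue \<Otimes>\<^sub>M lebesgue)"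
      using Xm \<Omega>m cm by (intro borel_measurable_times_ennreal borel_measurable_indicator pair_measureI) auto
    have iC: "(\<lambda>z. indicator ((- \<Omega>) \<times> \<Omega>) z * X z) \<in> borel_measurable (lebesgue \<Otimes>\<^sub>M lebesgue)"
      using Xm \<Omega>m cm by (intro borel_measurable_times_ennreal borel_measurable_indicator pair_measureI) auto
    have E: "ennreal (gamma_ns DIM('a) s / 4) * (\<integral>\<^sup>+ z. indicator (\<Omega> \<times> \<Omega>) z * X z \<partial>(lebesgue \<Otimes>\<^sub>M lebesgue))
        + ennreal (gamma_ns DIM('a) s / 2) * (\<integral>\<^sup>+ z. indicator (\<Omega> \<times> - \<Omega>) z * X z \<partial>(lebesgue \<Otimes>\<^sub>M lebesgue)) < \<infinity>"
      using vE unfolding frac_energy_def X_def by simp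
    have g4: "ennreal (gamma_ns DIM('a) s / 4) \<noteq> 0" "ennreal (gamma_ns DIM('a) s / 2) \<noteq> 0"
      using gp by (auto simp: ennreal_eq_0_iff)
    have A: "(\<integral>\<^sup>+ z. indicator (\<Omega> \<times> \<Omega>) z * X z \<partial>(lebesgue \<Otimes>\<^sub>M lebesgue)) < \<infinity>"
      using E g4 by (auto simp: ennreal_add_less_top ennreal_mult_less_top less_top[symmetric])
    have B: "(\<integral>\<^sup>+ z. indicator (\<Omega> \<times> - \<Omega>) z * X z \<partial>(lebesgue \<Otimes>\<^sub>M lebesgue)) < \<infinity>"
      using E g4 by (auto simp: ennreal_add_less_top ennreal_mult_less_top less_top[symmetric])
    have C: "(\<integral>\<^sup>+ z. indicator ((- \<Omega>) \<times> \<Omega>) z * X z \<partial>(lebesgue \<Otimes>\<^sub>M lebesgue))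
        = (\<integral>\<^sup>+ z. indicator (\<Omega> \<times> - \<Omega>) z * X z \<partial>(lebesgue \<Otimes>\<^sub>M lebesgue))"
    proof -
      have "(\<integral>\<^sup>+ z. indicator ((- \<Omega>) \<times> \<Omega>) z * X z \<partial>(lebesgue \<Otimes>\<^sub>M lebesgue))
          = (\<integral>\<^sup>+ x. \<integral>\<^sup>+ y. indicator ((- \<Omega>) \<times> \<Omega>) (x, y) * X (x, y) \<partial>lebesgue \<partial>lebesgue)"
        using sigma_finite_measure.nn_integral_fst[OF sf_lebesgue iC] by simp
      also have "\<dots> = (\<integral>\<^sup>+ x. \<integral>\<^sup>+ y. indicator (\<Omega> \<times> - \<Omega>) (y, x) * X (y, x) \<partial>lebesgue \<partial>lebesgue)"
        unfolding X_def frac_kernel_def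
        by (intro nn_integral_cong) (auto simp: indicator_def norm_minus_commute power2_commute)
      also have "\<dots> = (\<integral>\<^sup>+ z. indicator (\<Omega> \<times> - \<Omega>) z * X z \<partial>(lebesgue \<Otimes>\<^sub>M lebesgue))"
        using pair_sigma_finite.nn_integral_snd[OF psf iB] by simp
      finally show ?thesis .
    qed
    have aeP: "AE z in lebesgue \<Otimes>\<^sub>M lebesgue. (fst z \<notin> \<Omega> \<longrightarrow> \<bar>v (fst z)\<bar> \<le> M) \<and> (snd z \<notin> \<Omega> \<longrightarrow> \<bar>v (snd z)\<bar> \<le> M)"
    proof (rule pair_sigma_finite.AE_pair_measure[OF psf])
      show "{z \<in> space (lebesgue \<Otimes>\<^sub>M lebesgue). (fst z \<notin> \<Omega> \<longrightarrow> \<bar>v (fst z)\<bar> \<le> M) \<and> (snd z \<notin> \<Omega> \<longrightarrow> \<bar>v (snd z)\<bar> \<le> M)}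
          \<in> sets (lebesgue \<Otimes>\<^sub>M lebesgue)" by measurable
      show "AE x in lebesgue. AE y in lebesgue. (fst (x, y) \<notin> \<Omega> \<longrightarrow> \<bar>v (fst (x, y))\<bar> \<le> M) \<and> (snd (x, y) \<notin> \<Omega> \<longrightarrow> \<bar>v (snd (x, y))\<bar> \<le> M)"
        using vout
      proof eventually_elim
        case (elim x)
        show ?case using vout by eventually_elim (use elim in auto)
      qed
    qed
    have YX: "ennreal ((w a - w b)\<^sup>2 * frac_kernel s a b) \<le> ennreal ((v a - v b)\<^sup>2 * frac_kernel s a b)" for a b
    proof (intro ennreal_leI mult_right_mono kern_nonneg)
      show "(w a - w b)\<^sup>2 \<le> (v a - v b)\<^sup>2"
        unfolding w_def using trunc_lip[OF M(1)] abs_le_square_iff by blast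
    qed
    have "(\<integral>\<^sup>+ z. ennreal ((w (fst z) - w (snd z))\<^sup>2 * frac_kernel s (fst z) (snd z)) \<partial>(lebesgue \<Otimes>\<^sub>M lebesgue))
        \<le> (\<integral>\<^sup>+ z. indicator (\<Omega> \<times> \<Omega>) z * X z + indicator (\<Omega> \<times> - \<Omega>) z * X z + indicator ((- \<Omega>) \<times> \<Omega>) z * X z \<partial>(lebesgue \<Otimes>\<^sub>M lebesgue))"
      using aeP
    proof (intro nn_integral_mono_AE, eventually_elim)
      case (elim z)
      obtain a b where z: "z = (a, b)" by (cases z)
      show ?case
      proof (cases "a \<in> \<Omega> \<or> b \<in> \<Omega>")
        case True
        hence "indicator (\<Omega> \<times> \<Omega>) z * X z + indicator (\<Omega> \<times> - \<Omega>) z * X z + indicator ((- \<Omega>) \<times> \<Omega>) z * X z = X z"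
          unfolding z by (auto simp: indicator_def)
        thus ?thesis using YX[of a b] unfolding z X_def by simp
      next
        case False
        hence "w a = 0" "w b = 0" using elim unfolding z w_def by (auto intro: trunc_zero)
        thus ?thesis unfolding z by simp
      qed
    qed
    also have "\<dots> = (\<integral>\<^sup>+ z. indicator (\<Omega> \<times> \<Omega>) z * X z \<partial>(lebesgue \<Otimes>\<^sub>M lebesgue))
        + (\<integral>\<^sup>+ z. indicator (\<Omega> \<times> - \<Omega>) z * X z \<partial>(lebesgue \<Otimes>\<^sub>M lebesgue))
        + (\<integral>\<^sup>+ z. indicator ((- \<Omega>) \<times> \<Omega>) z * X z \<partial>(lebesgue \<Otimes>\<^sub>M lebesgue))"
      using iA iB iC by (simp add: nn_integral_add)
    also have "\<dots> < \<infinity>" using A B C by (simp add: ennreal_add_less_top)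
    finally show "(\<integral>\<^sup>+ z. ennreal ((w (fst z) - w (snd z))\<^sup>2 * frac_kernel s (fst z) (snd z)) \<partial>(lebesgue \<Otimes>\<^sub>M lebesgue)) < \<infinity>" .
  qed
  have wLp: "w \<in> Lp_on p \<Omega>"
    unfolding Lp_on_def
  proof (intro CollectI conjI)
    show "set_borel_measurable lebesgue \<Omega> w"
      unfolding set_borel_measurable_def by measurable
    have "(\<integral>\<^sup>+ x. indicator \<Omega> x * ennreal (\<bar>w x\<bar> powr p) \<partial>lebesgue) \<le> (\<integral>\<^sup>+ x. indicator \<Omega> x \<partial>lebesgue)"
    proof (intro nn_integral_mono)
      fix x
      have "\<bar>w x\<bar> powr p \<le> 1 powr p" using p wbd[of x] by (intro powr_mono2) auto
      hence "ennreal (\<bar>w x\<bar> powr p) \<le> 1" by simp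
      thus "indicator \<Omega> x * ennreal (\<bar>w x\<bar> powr p) \<le> indicator \<Omega> x"
        by (auto simp: indicator_def)
    qed
    also have "\<dots> = emeasure lebesgue \<Omega>" using \<Omega>m by simp
    also have "\<dots> < \<infinity>" by (rule \<Omega>F)
    finally show "(\<integral>\<^sup>+ x. indicator \<Omega> x * ennreal (\<bar>w x\<bar> powr p) \<partial>lebesgue) < \<infinity>" .
  qed
  have eq: "frac_form s \<Omega> v w + \<epsilon> powr (- 2 * s) * (\<integral> x. indicator \<Omega> x * (W' (v x) * w x) \<partial>lebesgue)
        = (\<integral> x. indicator \<Omega> x * (f x * w x) \<partial>lebesgue)"
    using sol w00 wLp unfolding weak_solution_def by blast
  have ind_int: "integrable lebesgue (indicator \<Omega> :: 'a \<Rightarrow> real)"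
    using \<Omega>m \<Omega>F by simp
  have W'cont: "continuous_on UNIV W'"
    using W'_deriv by (meson DERIV_isCont continuous_at_imp_continuous_on)
  have W'm[measurable]: "W' \<in> borel_measurable borel"
    using borel_measurable_continuous_onI[OF W'cont] .
  have vp_int: "integrable lebesgue (\<lambda>x. indicator \<Omega> x * \<bar>v x\<bar> powr p)"
  proof (rule integrableI_nonneg)
    show "(\<lambda>x. indicator \<Omega> x * \<bar>v x\<bar> powr p) \<in> borel_measurable lebesgue" by measurable
    show "AE x in lebesgue. 0 \<le> indicator \<Omega> x * \<bar>v x\<bar> powr p" by simp
    have "(\<integral>\<^sup>+ x. ennreal (indicator \<Omega> x * \<bar>v x\<bar> powr p) \<partial>lebesgue)
        = (\<integral>\<^sup>+ x. indicator \<Omega> x * ennreal (\<bar>v x\<bar> powr p) \<partial>lebesgue)"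
      by (intro nn_integral_cong) (simp split: split_indicator)
    also have "\<dots> < \<infinity>" using v(2) by (simp add: Lp_on_def)
    finally show "(\<integral>\<^sup>+ x. ennreal (indicator \<Omega> x * \<bar>v x\<bar> powr p) \<partial>lebesgue) < \<infinity>" .
  qed
  have I1_int: "integrable lebesgue (\<lambda>x. indicator \<Omega> x * (W' (v x) * w x))"
  proof (rule Bochner_Integration.integrable_bound)
    show "integrable lebesgue (\<lambda>x. c\<^sub>W * (indicator \<Omega> x * \<bar>v x\<bar> powr p) + (2 * c\<^sub>W) * indicator \<Omega> x)"
      using vp_int ind_int by (intro Bochner_Integration.integrable_add Bochner_Integration.integrable_mult_right)
    show "(\<lambda>x. indicator \<Omega> x * (W' (v x) * w x)) \<in> borel_measurable lebesgue" by measurable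
    show "AE x in lebesgue. norm (indicator \<Omega> x * (W' (v x) * w x))
        \<le> norm (c\<^sub>W * (indicator \<Omega> x * \<bar>v x\<bar> powr p) + (2 * c\<^sub>W) * indicator \<Omega> x)"
    proof (intro AE_I2)
      fix x
      have pw: "\<bar>v x\<bar> powr (p - 1) \<le> \<bar>v x\<bar> powr p + 1"
      proof (cases "\<bar>v x\<bar> \<le> 1")
        case True
        hence "\<bar>v x\<bar> powr (p - 1) \<le> 1 powr (p - 1)" using p by (intro powr_mono2) auto
        hence "\<bar>v x\<bar> powr (p - 1) \<le> 1" by simp
        moreover have "\<bar>v x\<bar> powr p \<ge> 0" by simp
        ultimately show ?thesis by linarith
      next
        case False
        hence "\<bar>v x\<bar> powr (p - 1) \<le> \<bar>v x\<bar> powr p" by (intro powr_mono) auto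
        thus ?thesis by simp
      qed
      have "\<bar>W' (v x) * w x\<bar> \<le> \<bar>W' (v x)\<bar>"
        using wbd[of x] by (simp add: abs_mult mult_left_le)
      also have "\<dots> \<le> c\<^sub>W * (\<bar>v x\<bar> powr (p-1) + 1)" using W'_growth[of "v x"] by simp
      also have "\<dots> \<le> c\<^sub>W * (\<bar>v x\<bar> powr p + 2)" using pw cW by (intro mult_left_mono) auto
      finally have b: "\<bar>W' (v x) * w x\<bar> \<le> c\<^sub>W * (\<bar>v x\<bar> powr p + 2)" .
      show "norm (indicator \<Omega> x * (W' (v x) * w x))
        \<le> norm (c\<^sub>W * (indicator \<Omega> x * \<bar>v x\<bar> powr p) + (2 * c\<^sub>W) * indicator \<Omega> x)"
        using b cW by (auto simp: indicator_def algebra_simps)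
    qed
  qed
  have fw_m: "(\<lambda>x. indicator \<Omega> x * (f x * w x)) \<in> borel_measurable lebesgue"
  proof -
    have "(\<lambda>x. (indicator \<Omega> x *\<^sub>R f x) * w x) \<in> borel_measurable lebesgue"
      using fm unfolding set_borel_measurable_def by measurable
    thus ?thesis by (simp add: mult.assoc)
  qed
  have I2_int: "integrable lebesgue (\<lambda>x. indicator \<Omega> x * (f x * w x))"
  proof (rule Bochner_Integration.integrable_bound)
    show "integrable lebesgue (\<lambda>x. F * indicator \<Omega> x)" using ind_int by simp
    show "(\<lambda>x. indicator \<Omega> x * (f x * w x)) \<in> borel_measurable lebesgue" by (rule fw_m)
    show "AE x in lebesgue. norm (indicator \<Omega> x * (f x * w x)) \<le> norm (F * indicator \<Omega> x)"
      using Cf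
    proof eventually_elim
      case (elim x)
      have "\<bar>f x * w x\<bar> \<le> F" if "x \<in> \<Omega>"
      proof -
        have "\<bar>f x * w x\<bar> = \<bar>f x\<bar> * \<bar>w x\<bar>" by (simp add: abs_mult)
        also have "\<dots> \<le> F * 1" using elim that wbd[of x] F_def
          by (intro mult_mono) auto
        finally show ?thesis by simp
      qed
      thus ?case using F0 by (auto simp: indicator_def)
    qed
  qed
  have J_int: "integrable lebesgue (\<lambda>x. indicator \<Omega> x * \<bar>w x\<bar>)"
  proof (rule Bochner_Integration.integrable_bound)
    show "integrable lebesgue (indicator \<Omega> :: 'a \<Rightarrow> real)" by (rule ind_int)
    show "(\<lambda>x. indicator \<Omega> x * \<bar>w x\<bar>) \<in> borel_measurable lebesgue" by measurable
    show "AE x in lebesgue. norm (indicator \<Omega> x * \<bar>w x\<bar>) \<le> norm (indicator \<Omega> x :: real)"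
      using wbd by (auto simp: indicator_def)
  qed
  define J where "J = (\<integral> x. indicator \<Omega> x * \<bar>w x\<bar> \<partial>lebesgue)"
  have J0: "J \<ge> 0" unfolding J_def by (intro integral_nonneg_AE) simp
  have pt: "0 \<le> indicator A z * ((v (fst z) - v (snd z)) * (w (fst z) - w (snd z)) * frac_kernel s (fst z) (snd z))" for A z
    unfolding w_def
    by (rule mult_nonneg_nonneg[OF _ mult_nonneg_nonneg[OF trunc_prod[OF M(1)] kern_nonneg]]) simp
  have FF: "frac_form s \<Omega> v w \<ge> 0"
  proof -
    have i: "0 \<le> (\<integral> z. indicator A z * ((v (fst z) - v (snd z)) * (w (fst z) - w (snd z)) * frac_kernel s (fst z) (snd z)) \<partial>(lebesgue \<Otimes>\<^sub>M lebesgue))" for A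
      by (rule integral_nonneg_AE, rule AE_I2, rule pt)
    have gen: "0 \<le> gamma_ns DIM('a) s / 2 * a + gamma_ns DIM('a) s * b" if "0 \<le> a" "0 \<le> b" for a b
      using gp that by simp
    show ?thesis unfolding frac_form_def by (rule gen[OF i i])
  qed
  have I1: "(\<integral> x. indicator \<Omega> x * (W' (v x) * w x) \<partial>lebesgue) \<ge> K * J"
  proof -
    have "K * J = (\<integral> x. indicator \<Omega> x * (K * \<bar>w x\<bar>) \<partial>lebesgue)"
      unfolding J_def by (simp add: mult.left_commute)
    also have "\<dots> \<le> (\<integral> x. indicator \<Omega> x * (W' (v x) * w x) \<partial>lebesgue)"
    proof (rule integral_mono)
      show "integrable lebesgue (\<lambda>x. indicator \<Omega> x * (K * \<bar>w x\<bar>))"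
        using Bochner_Integration.integrable_mult_right[OF J_int, of K] by (simp add: mult.left_commute)
      show "integrable lebesgue (\<lambda>x. indicator \<Omega> x * (W' (v x) * w x))" by (rule I1_int)
      show "indicator \<Omega> x * (K * \<bar>w x\<bar>) \<le> indicator \<Omega> x * (W' (v x) * w x)" for x
        using WT[of "v x"] by (auto simp: indicator_def w_def)
    qed
    finally show ?thesis .
  qed
  have I2: "(\<integral> x. indicator \<Omega> x * (f x * w x) \<partial>lebesgue) \<le> F * J"
  proof -
    have "(\<integral> x. indicator \<Omega> x * (f x * w x) \<partial>lebesgue) \<le> (\<integral> x. indicator \<Omega> x * (F * \<bar>w x\<bar>) \<partial>lebesgue)"
      using J_int I2_int
    proof (intro integral_mono_AE)
      show "integrable lebesgue (\<lambda>x. indicator \<Omega> x * (F * \<bar>w x\<bar>))"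
        using Bochner_Integration.integrable_mult_right[OF J_int, of F] by (simp add: mult.left_commute)
      show "AE x in lebesgue. indicator \<Omega> x * (f x * w x) \<le> indicator \<Omega> x * (F * \<bar>w x\<bar>)"
        using Cf
      proof eventually_elim
        case (elim x)
        have "f x * w x \<le> F * \<bar>w x\<bar>" if "x \<in> \<Omega>"
        proof -
          have "f x * w x \<le> \<bar>f x\<bar> * \<bar>w x\<bar>" by (metis abs_ge_self abs_mult)
          also have "\<dots> \<le> F * \<bar>w x\<bar>" using elim that F_def by (intro mult_right_mono) auto
          finally show ?thesis .
        qed
        thus ?case by (auto simp: indicator_def)
      qed
    qed (use I2_int in auto)
    also have "\<dots> = F * J" unfolding J_def by (simp add: mult.left_commute)
    finally show ?thesis .
  qed
  have "\<epsilon> powr (- 2 * s) * (K * J) \<le> \<epsilon> powr (- 2 * s) * (\<integral> x. indicator \<Omega> x * (W' (v x) * w x) \<partial>lebesgue)"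
    using I1 by (intro mult_left_mono) auto
  also have "\<dots> \<le> F * J" using eq FF I2 by linarith
  finally have "(F + 1) * J \<le> F * J" using epsK by (simp add: mult.assoc[symmetric])
  hence "J = 0" using J0 by (simp add: algebra_simps)
  hence "AE x in lebesgue. indicator \<Omega> x * \<bar>w x\<bar> = 0"
    unfolding J_def using integral_nonneg_eq_0_iff_AE[OF J_int] by simp
  hence inb: "AE x in lebesgue. x \<in> \<Omega> \<longrightarrow> \<bar>v x\<bar> \<le> M"
    by eventually_elim (auto simp: w_def indicator_def intro: trunc_nz M)
  have "AE x in lebesgue. \<bar>v x\<bar> \<le> M" using inb vout by eventually_elim auto
  thus ?thesis using vm by blast
qed

end
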